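(* For any continuous function $f:\mathrm{SO}(3)\to S^3$, there exists a rotation $R\in\mathrm{SO}(3)$ such that $d(R,\mathbf{R}_Q(f(R)))=\pi$.
   Context: $S^3\subset\mathbb{R}^4$ is the set of unit quaternions, identifying $w+x\mathbf{i}+y\mathbf{j}+z\mathbf{k}$ with $(w,x,y,z)$. $\mathbf{R}_Q:S^3\to\mathrm{SO}(3)$ is the standard conversion from a unit quaternion to the rotation it represents: $$\mathbf{R}_Q(w,x,y,z)=\begin{bmatrix}1-2y^2-2z^2 & 2(xy-zw) & 2(xz+yw)\\ 2(xy+zw) & 1-2x^2-2z^2 & 2(yz-xw)\\ 2(xz-yw) & 2(yz+xw) & 1-2x^2-2y^2\end{bmatrix}.$$ For $R_1,R_2\in\mathrm{SO}(3)$, $d(R_1,R_2)=\cos^{-1}\frac{\mathrm{tr}(R_2R_1^{-1})-1}{2}\in[0,\pi]$ is the angle of the rotation $R_2R_1^{-1}$. *)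

theory Defs
  imports "HOL-Analysis.Analysis"
begin

definition SO3 :: "(real^3^3) set" where
  "SO3 = {R. rotation_matrix R}"

text \<open>S^3 as unit vectors of R^4; a quaternion w + x i + y j + z k is the vector
  with components q$1 = w, q$2 = x, q$3 = y, q$4 = z.\<close>
definition S3 :: "(real^4) set" where
  "S3 = {q. norm q = 1}"

definition quat_to_rot :: "real^4 \<Rightarrow> real^3^3" where
  "quat_to_rot q = (let w = q$1; x = q$2; y = q$3; z = q$4 in
     vector [vector [1 - 2*y^2 - 2*z^2, 2*(x*y - z*w), 2*(x*z + y*w)],
             vector [2*(x*y + z*w), 1 - 2*x^2 - 2*z^2, 2*(y*z - x*w)],
             vector [2*(x*z - y*w), 2*(y*z + x*w), 1 - 2*x^2 - 2*y^2]])"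

definition rot_dist :: "real^3^3 \<Rightarrow> real^3^3 \<Rightarrow> real" where
  "rot_dist R1 R2 = arccos ((trace (R2 ** matrix_inv R1) - 1) / 2)"

end

theory Submission
  imports Defs
begin

definition gam :: "real \<Rightarrow> real^3^3" where
  "gam t = vector [vector [cos(2*t), - sin(2*t), 0], vector [sin(2*t), cos(2*t), 0], vector [0, 0, 1]]"

lemma gam_orth: "transpose (gam t) ** gam t = mat 1"
  by (simp add: gam_def vec_eq_iff forall_3 matrix_matrix_mult_def sum_3 transpose_def mat_def
      power2_eq_square[symmetric])

lemma gam_orth2: "gam t ** transpose (gam t) = mat 1"
  by (simp add: gam_def vec_eq_iff forall_3 matrix_matrix_mult_def sum_3 transpose_def mat_def
      power2_eq_square[symmetric])

lemma gam_SO3: "gam t \<in> SO3"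
proof -
  have "orthogonal_matrix (gam t)" by (simp only: orthogonal_matrix gam_orth)
  moreover have "det (gam t) = 1"
    by (simp add: det_3 gam_def power2_eq_square[symmetric])
  ultimately show ?thesis unfolding SO3_def rotation_matrix_def by simp
qed

lemma matrix_inv_eq:
  fixes A :: "real^3^3"
  assumes "A ** B = mat 1" "B ** A = mat 1"
  shows "matrix_inv A = B"
proof -
  have "A ** matrix_inv A = mat 1 \<and> matrix_inv A ** A = mat 1"
    unfolding matrix_inv_def by (rule someI[of _ B]) (use assms in auto)
  then have "matrix_inv A = matrix_inv A ** (A ** B)" using assms by simp
  also have "\<dots> = B" using \<open>_ \<and> _\<close> by (simp add: matrix_mul_assoc)
  finally show ?thesis .
qed

lemma gam_inv: "matrix_inv (gam t) = transpose (gam t)"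
  by (rule matrix_inv_eq[OF gam_orth2 gam_orth])

lemma gam_cont: "continuous_on S gam"
proof -
  have c: "continuous_on S (\<lambda>t. gam t $ i $ j)" for i j
    using exhaust_3[of i] exhaust_3[of j]
    apply (elim disjE)
    apply (simp_all add: gam_def)
    apply (intro continuous_on_cos continuous_on_sin continuous_on_minus continuous_on_mult continuous_on_const continuous_on_id)+
    done
  have e: "gam = (\<lambda>t. \<chi> i. \<chi> j. gam t $ i $ j)" by (simp add: vec_eq_iff)
  have "continuous_on S (\<lambda>t. \<chi> i. \<chi> j. gam t $ i $ j)"
    by (intro continuous_on_vec_lambda c)
  then show ?thesis by (simp only: e[symmetric])
qed

lemma gam_0: "gam 0 = gam pi"
  by (simp add: gam_def)

lemma trace_formula:
  fixes q :: "real^4"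
  assumes "norm q = 1"
  shows "trace (quat_to_rot q ** transpose (gam t)) = 4 * (q$1 * cos t + q$4 * sin t)^2 - 1"
proof -
  have n: "q$1^2 + q$2^2 + q$3^2 + q$4^2 = 1"
  proof -
    have "norm q ^ 2 = 1" using assms by simp
    then show ?thesis unfolding norm_vec_def L2_set_def
      by (simp add: sum_4)
  qed
  have cs: "cos t ^2 + sin t ^2 = 1" by simp
  have "trace (quat_to_rot q ** transpose (gam t)) = 
     (1 - 2*q$3^2 - 2*q$4^2) * cos(2*t) + 2*(q$2*q$3 - q$4*q$1) * (- sin(2*t))
     + 2*(q$2*q$3 + q$4*q$1) * sin(2*t) + (1 - 2*q$2^2 - 2*q$4^2) * cos(2*t) + (1 - 2*q$2^2 - 2*q$3^2)"
    unfolding trace_def quat_to_rot_def gam_def Let_def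
    by (simp add: sum_3 matrix_matrix_mult_def transpose_def)
  also have "\<dots> = 4 * (q$1 * cos t + q$4 * sin t)^2 - 1"
    unfolding cos_double sin_double
    using n cs by algebra
  finally show ?thesis .
qed

theorem theorem1:
  fixes f :: "real^3^3 \<Rightarrow> real^4"
  assumes "continuous_on SO3 f"
    and "f ` SO3 \<subseteq> S3"
  shows "\<exists>R\<in>SO3. rot_dist R (quat_to_rot (f R)) = pi"
proof -
  define w where "w t = f (gam t) $ 1 * cos t + f (gam t) $ 4 * sin t" for t
  have cw: "continuous_on {0..pi} w"
  proof -
    have cf: "continuous_on {0..pi} (\<lambda>t. f (gam t))"
      by (rule continuous_on_compose2[OF assms(1) gam_cont]) (use gam_SO3 in auto)
    show ?thesis unfolding w_def by (intro continuous_on_add continuous_on_mult continuous_on_component cf continuous_on_cos continuous_on_sin continuous_on_id)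
  qed
  have "w pi = - w 0" unfolding w_def using gam_0 by simp
  then obtain t where t: "0 \<le> t" "t \<le> pi" "w t = 0"
    using IVT'[of w 0 0 pi] IVT2'[of w pi 0 0] cw
    by (cases "w 0 \<le> 0") (auto simp: pi_ge_zero)
  have "norm (f (gam t)) = 1" using assms(2) gam_SO3 unfolding S3_def by auto
  then have "trace (quat_to_rot (f (gam t)) ** matrix_inv (gam t)) = -1"
    using trace_formula[of "f (gam t)" t] t(3) unfolding w_def gam_inv by simp
  then show ?thesis using gam_SO3 unfolding rot_dist_def by (intro bexI[of _ "gam t"]) auto
qed

end
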